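(* Let $\Sigma$ be a finite alphabet, $M\in\mathbb N$, $Z\subseteq\Sigma^{\mathbb Z}$ a sofic shift of $M$-finite type, $A:\Sigma\to\mathbb R^{n\times n}$, and consider the switched linear system $x(k+1)=A(z_k)x(k)$, $\bar z\in Z$, with solution $\Phi(k,x_0,\bar z)$. Fix $\gamma\in[0,1)$. The following are equivalent: (1) for every $\tilde\gamma\in(\gamma,1)$ the system is uniformly exponentially stable with decay rate $\tilde\gamma$, i.e. there is $c>0$ with $|\Phi(k,x_0,\bar z)|\le c\,\tilde\gamma^k|x_0|$ for all $k\in\mathbb N,x_0\in\mathbb R^n,\bar z\in Z$; (2) for every $\tilde\gamma\in(\gamma,1)$ there exist $K\ge\max(M,1)$, $k\in\{0,\dots,K\}$, $M_1,M_2>0$ and $Q:\Sigma^K\cap\mathcal L(Z)\to\mathbb S^n_+$ such that $M_1I_n\preceq Q(w)\preceq M_2I_n$ for all $w\in S_{K,k}(Z)$ and $A(h)^\top Q(j)A(h)\prec\tilde\gamma^2Q(w)$ for all $(w,j,h)\in E_{K,k}(Z)$.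
   Context: $\Sigma^{\mathbb Z}$: bi-infinite sequences over $\Sigma$; $\mathcal L(Z)$: words $w$ of length $K$ (any $K$) such that some $\bar z\in Z$ has $(z_0,\dots,z_{K-1})=w$; a sofic shift is the set of labels of bi-infinite walks in a finite edge-labeled graph. $Z$ is of $M$-finite type if for all words $u,v,w$: $u\cdot v\in\mathcal L(Z)$, $v\cdot w\in\mathcal L(Z)$, $|v|\ge M$ imply $u\cdot v\cdot w\in\mathcal L(Z)$. For $w=(w_0,\dots,w_{K-1})$, $w^-=(w_0,\dots,w_{K-2})$, $w^+=(w_1,\dots,w_{K-1})$. Generalized De Bruijn graph $\mathcal G_{K,k}(Z)=(S_{K,k}(Z),E_{K,k}(Z))$: nodes $S_{K,k}(Z)=\Sigma^K\cap\mathcal L(Z)$; $(w,j,h)\in E_{K,k}(Z)$ iff $w^+=j^-$, $(w_0,\dots,w_{K-1},j_{K-1})\in\mathcal L(Z)$, and $h=j_{K-1}$ if $k=0$, $h=w_{K-k}$ if $1\le k\le K$. $\mathbb S^n_+$: symmetric positive definite matrices; $\preceq,\prec$ Loewner order. *)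

theory Defs
  imports "HOL-Analysis.Analysis"
begin

definition lang :: "(int \<Rightarrow> 'a) set \<Rightarrow> 'a list set" where
  "lang Z = {w. \<exists>z\<in>Z. \<forall>i<length w. z (int i) = w ! i}"

definition sofic :: "(int \<Rightarrow> 'a) set \<Rightarrow> bool" where
  "sofic Z \<longleftrightarrow> (\<exists>(V::nat set) (E::(nat \<times> 'a \<times> nat) set).
      finite V \<and> finite E \<and> (\<forall>(p,a,q)\<in>E. p \<in> V \<and> q \<in> V) \<and>
      Z = {z. \<exists>p::int \<Rightarrow> nat. \<forall>i. (p i, z i, p (i+1)) \<in> E})"

definition M_finite_type :: "nat \<Rightarrow> (int \<Rightarrow> 'a) set \<Rightarrow> bool" where
  "M_finite_type M Z \<longleftrightarrow> (\<forall>u v w. u @ v \<in> lang Z \<longrightarrow> v @ w \<in> lang Z \<longrightarrow>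
      length v \<ge> M \<longrightarrow> u @ v @ w \<in> lang Z)"

definition dbnodes :: "nat \<Rightarrow> (int \<Rightarrow> 'a) set \<Rightarrow> 'a list set" where
  "dbnodes K Z = {w. length w = K \<and> w \<in> lang Z}"

text \<open>Edges (w, j, h) of the generalized De Bruijn graph G_{K,k}(Z).
  w^+ = tl w, j^- = butlast j, j_{K-1} = last j, w_{K-k} = w ! (K-k).\<close>
definition dbedges :: "nat \<Rightarrow> nat \<Rightarrow> (int \<Rightarrow> 'a) set \<Rightarrow> ('a list \<times> 'a list \<times> 'a) set" where
  "dbedges K k Z = {(w, j, h). w \<in> dbnodes K Z \<and> j \<in> dbnodes K Z \<and>
      tl w = butlast j \<and> w @ [last j] \<in> lang Z \<and>
      (if k = 0 then h = last j else (1 \<le> k \<and> k \<le> K \<and> h = w ! (K - k)))}"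

fun Phi :: "('a \<Rightarrow> real^'n^'n) \<Rightarrow> nat \<Rightarrow> real^'n \<Rightarrow> (int \<Rightarrow> 'a) \<Rightarrow> real^'n" where
  "Phi A 0 x z = x"
| "Phi A (Suc k) x z = A (z (int k)) *v Phi A k x z"

definition psd :: "real^'n^'n \<Rightarrow> bool" where
  "psd P \<longleftrightarrow> transpose P = P \<and> (\<forall>x. 0 \<le> x \<bullet> (P *v x))"

definition pd :: "real^'n^'n \<Rightarrow> bool" where
  "pd P \<longleftrightarrow> transpose P = P \<and> (\<forall>x. x \<noteq> 0 \<longrightarrow> 0 < x \<bullet> (P *v x))"

definition loewner_le :: "real^'n^'n \<Rightarrow> real^'n^'n \<Rightarrow> bool" where
  "loewner_le P Q \<longleftrightarrow> psd (Q - P)"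

definition loewner_less :: "real^'n^'n \<Rightarrow> real^'n^'n \<Rightarrow> bool" where
  "loewner_less P Q \<longleftrightarrow> pd (Q - P)"

end

theory Submission
  imports Defs
begin

definition qf :: "real^'n^'n \<Rightarrow> real^'n \<Rightarrow> real" where
  "qf P x = x \<bullet> (P *v x)"

lemma transpose_add: "transpose (A + B) = transpose A + transpose (B::'b::comm_monoid_add^'n^'m)"
  by (simp add: transpose_def vec_eq_iff)
lemma transpose_diff: "transpose (A - B) = transpose A - transpose (B::'b::ab_group_add^'n^'m)"
  by (simp add: transpose_def vec_eq_iff)
lemma transpose_zero: "transpose (0::'b::zero^'n^'m) = 0"
  by (simp add: transpose_def vec_eq_iff)
lemma transpose_sum: "transpose (sum f S) = sum (\<lambda>i. transpose (f i)) (S::'c set)"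
  for f :: "'c \<Rightarrow> real^'n^'m"
  by (induction S rule: infinite_finite_induct) (auto simp: transpose_add transpose_zero)

lemma sum_mv: "sum f S *v x = (\<Sum>i\<in>S. f i *v x)" for f :: "'c \<Rightarrow> real^'n^'m"
  by (induction S rule: infinite_finite_induct) (auto simp: matrix_vector_mult_add_rdistrib matrix_vector_mult_0)

lemma qf_diff: "qf (S - T) x = qf S x - qf T x"
  by (simp add: qf_def matrix_vector_mult_diff_rdistrib inner_diff_right)
lemma qf_scale: "qf (c *\<^sub>R S) x = c * qf S x"
  by (simp add: qf_def scaleR_matrix_vector_assoc[symmetric])
lemma qf_sum: "qf (sum f S) x = (\<Sum>i\<in>S. qf (f i) x)"
  by (simp add: qf_def sum_mv inner_sum_right)
lemma inner_vm: "x \<bullet> (y v* B) = (B *v x) \<bullet> (y::real^'n)"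
  by (metis inner_commute dot_lmul_matrix)
lemma qf_gram: "qf (transpose P ** P) x = (norm (P *v x))^2"
  by (simp add: qf_def matrix_vector_mul_assoc[symmetric] transpose_matrix_vector
      inner_vm power2_norm_eq_inner)
lemma qf_conj: "qf (transpose B ** Q ** B) x = qf Q (B *v x)"
  by (simp add: qf_def matrix_vector_mul_assoc[symmetric] transpose_matrix_vector
      inner_vm inner_commute)
lemma mat_mv: "mat m *v x = m *\<^sub>R x"
  proof -
  have "mat m = m *\<^sub>R (mat 1 :: real^'n^'n)" by (simp add: vec_eq_iff mat_def)
  then show ?thesis by (metis scaleR_matrix_vector_assoc matrix_vector_mul_lid)
qed
lemma qf_mat: "qf (mat m) x = m * (norm x)^2"
  by (simp add: qf_def mat_mv power2_norm_eq_inner)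

fun Pm :: "('a \<Rightarrow> real^'n^'n) \<Rightarrow> 'a list \<Rightarrow> nat \<Rightarrow> real^'n^'n" where
  "Pm A w 0 = mat 1"
| "Pm A w (Suc t) = A (w ! t) ** Pm A w t"

lemma Pm_Phi: "(\<forall>i<t. z (int i) = w ! i) \<Longrightarrow> Pm A w t *v x = Phi A t x z"
  by (induction t) (auto simp: matrix_vector_mul_assoc[symmetric])

lemma Pm_cons: "Pm A (a # u) (Suc t) = Pm A u t ** A a"
  by (induction t) (auto simp: matrix_mul_assoc)

lemma Pm_append: "t \<le> length u \<Longrightarrow> Pm A (u @ v) t = Pm A u t"
  by (induction t) (auto simp: nth_append)

lemma sofic_shift:
  assumes "sofic Z" "z \<in> Z" shows "(\<lambda>i. z (i + int s)) \<in> Z"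
proof -
  obtain V E where Z: "Z = {z. \<exists>p::int \<Rightarrow> nat. \<forall>i. (p i, z i, p (i+1)) \<in> E}"
    using assms(1) unfolding sofic_def by blast
  then obtain p where p: "\<forall>i. (p i, z i, p (i+1)) \<in> E" using assms(2) by blast
  show ?thesis unfolding Z
  proof (intro CollectI exI[of _ "\<lambda>i. p (i + int s)"] allI)
    fix i
    show "((\<lambda>i. p (i + int s)) i, z (i + int s), (\<lambda>i. p (i + int s)) (i + 1)) \<in> E"
      using p[rule_format, of "i + int s"] by (simp add: algebra_simps)
  qed
qed

lemma window_lang:
  assumes "sofic Z" "z \<in> Z" shows "map (\<lambda>i. z (int (s+i))) [0..<L] \<in> lang Z"
  unfolding lang_def
  by (rule CollectI, rule bexI[OF _ sofic_shift[OF assms, of s]]) (simp add: add.commute)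


lemma forward:
  fixes Z :: "(int \<Rightarrow> 'a::finite) set" and A :: "'a \<Rightarrow> real^'n^'n"
  assumes g0: "0 \<le> \<gamma>" and gg: "\<gamma> < \<gamma>'" and g1: "\<gamma>' < 1"
    and H: "\<forall>\<gamma>'. \<gamma> < \<gamma>' \<and> \<gamma>' < 1 \<longrightarrow>
            (\<exists>c>0. \<forall>k x0. \<forall>z\<in>Z. norm (Phi A k x0 z) \<le> c * \<gamma>' ^ k * norm x0)"
  shows "\<exists>K k M1 M2 (Q :: 'a list \<Rightarrow> real^'n^'n).
               K \<ge> max M 1 \<and> k \<le> K \<and> M1 > 0 \<and> M2 > 0 \<and>
               (\<forall>w\<in>dbnodes K Z. pd (Q w) \<and>
                   loewner_le (mat M1) (Q w) \<and> loewner_le (Q w) (mat M2)) \<and>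
               (\<forall>(w, j, h)\<in>dbedges K k Z.
                   loewner_less (transpose (A h) ** Q j ** A h) (\<gamma>'\<^sup>2 *\<^sub>R Q w))"
proof -
  define ga where "ga = (\<gamma> + \<gamma>') / 2"
  have ga: "\<gamma> < ga" "ga < 1" "0 < ga" "ga < \<gamma>'" using g0 gg g1 by (auto simp: ga_def)
  obtain c where c: "c > 0" and cb: "\<forall>k x0. \<forall>z\<in>Z. norm (Phi A k x0 z) \<le> c * ga ^ k * norm x0"
    using H ga by blast
  have gp: "\<gamma>' > 0" using ga by simp
  define r where "r = ga / \<gamma>'"
  have r: "0 < r" "r < 1" using ga gp by (auto simp: r_def)
  have r2: "0 < r^2" "r^2 < 1" using r by (auto simp: power_less_one_iff)
  obtain n where n: "(r^2)^n < 1 / c^2" using real_arch_pow_inv[OF _ r2(2), of "1/c^2"] c by auto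
  define K where "K = n + max M 1"
  have K1: "K \<ge> 1" "K \<ge> max M 1" by (auto simp: K_def)
  have rK: "c^2 * (r^2)^K < 1"
  proof -
    have "(r^2)^K \<le> (r^2)^n" unfolding K_def using r2 r by (intro power_decreasing) auto
    then have "(r^2)^K < 1/c^2" using n by linarith
    then show ?thesis using c by (simp add: field_simps)
  qed
  define g where "g = 1 / \<gamma>'^2"
  have g: "g > 0" using gp by (simp add: g_def)
  define Q where "Q w = (\<Sum>t<K. g^t *\<^sub>R (transpose (Pm A w t) ** Pm A w t))" for w
  have qfQ: "qf (Q w) x = (\<Sum>t<K. g^t * (norm (Pm A w t *v x))^2)" for w x
    by (simp add: Q_def qf_sum qf_scale qf_gram)
  have symQ: "transpose (Q w) = Q w" for w
    by (simp add: Q_def transpose_sum transpose_scalar matrix_transpose_mul)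
  have qf0: "qf P 0 = 0" for P :: "real^'n^'n" by (simp add: qf_def)
  have term_bd: "g^t * (norm (Pm A w t *v x))^2 \<le> c^2 * (r^2)^t * (norm x)^2"
    if w: "w \<in> dbnodes K Z" and t: "t \<le> K" for w t x
  proof -
    obtain z where z: "z \<in> Z" "\<forall>i<K. z (int i) = w ! i"
      using w unfolding dbnodes_def lang_def by auto
    have "Pm A w t *v x = Phi A t x z" using z t by (intro Pm_Phi) auto
    then have "norm (Pm A w t *v x) \<le> c * ga^t * norm x" using cb z by auto
    then have "(norm (Pm A w t *v x))^2 \<le> (c * ga^t * norm x)^2"
      by (intro power_mono) auto
    then have "g^t * (norm (Pm A w t *v x))^2 \<le> g^t * (c * ga^t * norm x)^2"
      using g by (intro mult_left_mono) auto
    also have "g^t * (c * ga^t * norm x)^2 = c^2 * (r^2)^t * (norm x)^2"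
      unfolding g_def r_def by (simp add: power_mult_distrib power_divide field_simps power_mult[symmetric] mult.commute)
    finally show ?thesis .
  qed
  have lowQ: "(norm x)^2 \<le> qf (Q w) x" for w x
  proof -
    have "g^0 * (norm (Pm A w 0 *v x))^2 \<le> (\<Sum>t<K. g^t * (norm (Pm A w t *v x))^2)"
      using K1 g by (intro member_le_sum) auto
    then show ?thesis by (simp add: qfQ)
  qed
  define M2 where "M2 = real K * c^2 + 1"
  have upQ: "qf (Q w) x \<le> M2 * (norm x)^2" if w: "w \<in> dbnodes K Z" for w x
  proof -
    have "qf (Q w) x \<le> (\<Sum>t<K. c^2 * (norm x)^2)"
      unfolding qfQ
    proof (rule sum_mono)
      fix t assume "t \<in> {..<K}"
      then have "g^t * (norm (Pm A w t *v x))^2 \<le> c^2 * (r^2)^t * (norm x)^2"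
        using term_bd w by auto
      also have "\<dots> \<le> c^2 * 1 * (norm x)^2"
        using r2 r by (intro mult_right_mono mult_left_mono power_le_one) auto
      finally show "g^t * (norm (Pm A w t *v x))^2 \<le> c^2 * (norm x)^2" by simp
    qed
    also have "\<dots> \<le> M2 * (norm x)^2" by (simp add: M2_def algebra_simps)
    finally show ?thesis .
  qed
  have nodes: "\<forall>w\<in>dbnodes K Z. pd (Q w) \<and> loewner_le (mat 1) (Q w) \<and> loewner_le (Q w) (mat M2)"
  proof (intro ballI conjI)
    fix w assume w: "w \<in> dbnodes K Z"
    show "pd (Q w)" unfolding pd_def
    proof (intro conjI allI impI)
      show "transpose (Q w) = Q w" by (rule symQ)
      fix x :: "real^'n" assume "x \<noteq> 0"
      then have "0 < (norm x)^2" by simp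
      then show "0 < x \<bullet> (Q w *v x)" using lowQ[of x w] unfolding qf_def by linarith
    qed
    show "loewner_le (mat 1) (Q w)" unfolding loewner_le_def psd_def
    proof (intro conjI allI)
      show "transpose (Q w - mat 1) = Q w - mat 1" by (simp add: transpose_diff symQ transpose_mat)
      fix x :: "real^'n"
      show "0 \<le> x \<bullet> ((Q w - mat 1) *v x)"
        using lowQ[of x w] qf_diff[of "Q w" "mat 1" x] qf_mat[of 1 x] unfolding qf_def by linarith
    qed
    show "loewner_le (Q w) (mat M2)" unfolding loewner_le_def psd_def
    proof (intro conjI allI)
      show "transpose (mat M2 - Q w) = mat M2 - Q w" by (simp add: transpose_diff symQ transpose_mat)
      fix x :: "real^'n"
      show "0 \<le> x \<bullet> ((mat M2 - Q w) *v x)"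
        using upQ[OF w, of x] qf_diff[of "mat M2" "Q w" x] qf_mat[of M2 x] unfolding qf_def by linarith
    qed
  qed
  have edges: "\<forall>(w, j, h)\<in>dbedges K K Z.
                   loewner_less (transpose (A h) ** Q j ** A h) (\<gamma>'\<^sup>2 *\<^sub>R Q w)"
  proof (intro ballI, clarify)
    fix w j h assume e: "(w, j, h) \<in> dbedges K K Z"
    then have w: "w \<in> dbnodes K Z" and j: "j \<in> dbnodes K Z" and tb: "tl w = butlast j"
      and h: "h = w ! 0"
      using K1 by (auto simp: dbedges_def)
    have lw: "length w = K" and lj: "length j = K" using w j by (auto simp: dbnodes_def)
    obtain a v where av: "w = a # v" using lw K1 by (cases w) auto
    have ha: "h = a" using h av by simp
    have jv: "j = v @ [last j]" using tb av lj K1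
      by (metis append_butlast_last_id length_0_conv list.sel(3) not_one_le_zero)
    have lv: "length (a # v) = K" using lw av by simp
    define f where "f t x = g^t * (norm (Pm A w t *v x))^2" for t x
    have shift: "qf (Q j) (A h *v x) = \<gamma>'^2 * (\<Sum>t<K. f (Suc t) x)" for x
    proof -
      have "qf (Q j) (A h *v x) = (\<Sum>t<K. g^t * (norm (Pm A w (Suc t) *v x))^2)"
        unfolding qfQ
      proof (rule sum.cong)
        fix t assume "t \<in> {..<K}"
        then have "Suc t \<le> length (a # v)" using lv by simp
        then have "Pm A ((a # v) @ [last j]) (Suc t) = Pm A w (Suc t)"
          using av Pm_append by metis
        then have "Pm A j t ** A a = Pm A w (Suc t)"
          using Pm_cons[of A a j t] jv by simp
        then show "g^t * (norm (Pm A j t *v (A h *v x)))^2 = g^t * (norm (Pm A w (Suc t) *v x))^2"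
          by (simp add: ha matrix_vector_mul_assoc)
      qed simp
      also have "\<dots> = \<gamma>'^2 * (\<Sum>t<K. f (Suc t) x)"
        unfolding f_def sum_distrib_left
        by (rule sum.cong) (use gp in \<open>auto simp: g_def field_simps\<close>)
      finally show ?thesis .
    qed
    show "loewner_less (transpose (A h) ** Q j ** A h) (\<gamma>'\<^sup>2 *\<^sub>R Q w)"
      unfolding loewner_less_def pd_def
    proof (intro conjI allI impI)
      show "transpose (\<gamma>'\<^sup>2 *\<^sub>R Q w - transpose (A h) ** Q j ** A h) =
            \<gamma>'\<^sup>2 *\<^sub>R Q w - transpose (A h) ** Q j ** A h"
        by (simp add: transpose_diff transpose_scalar matrix_transpose_mul symQ matrix_mul_assoc)
      fix x :: "real^'n" assume x: "x \<noteq> 0"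
      have eq: "qf (\<gamma>'\<^sup>2 *\<^sub>R Q w - transpose (A h) ** Q j ** A h) x
             = \<gamma>'^2 * (f 0 x - f K x)"
      proof -
        have "qf (\<gamma>'\<^sup>2 *\<^sub>R Q w - transpose (A h) ** Q j ** A h) x
            = \<gamma>'^2 * ((\<Sum>t<K. f t x) - (\<Sum>t<K. f (Suc t) x))"
          unfolding qf_diff qf_scale qf_conj shift unfolding qfQ f_def by (simp only: right_diff_distrib)
        also have "(\<Sum>t<K. f t x) - (\<Sum>t<K. f (Suc t) x) = f 0 x - f K x"
          using sum_lessThan_telescope[of "\<lambda>t. f t x" K] by (simp add: sum_subtractf)
        finally show ?thesis .
      qed
      have nx: "0 < (norm x)^2" using x by simp
      have "f K x \<le> c^2 * (r^2)^K * (norm x)^2" unfolding f_def using term_bd[OF w, of K x] by simp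
      also have "\<dots> < (norm x)^2" using rK nx by simp
      finally have "f K x < f 0 x" by (simp add: f_def)
      then have "0 < \<gamma>'^2 * (f 0 x - f K x)" using gp by simp
      then show "0 < x \<bullet> ((\<gamma>'\<^sup>2 *\<^sub>R Q w - transpose (A h) ** Q j ** A h) *v x)"
        using eq by (simp add: qf_def)
    qed
  qed
  show ?thesis
    apply (rule exI[of _ K], rule exI[of _ K], rule exI[of _ 1], rule exI[of _ M2], rule exI[of _ Q])
    using K1 nodes edges c by (auto simp: M2_def intro: add_nonneg_pos)
qed


lemma Phi_bound:
  assumes "\<forall>a x. norm (A a *v x) \<le> B * norm x" "B \<ge> 1"
  shows "norm (Phi A t x z) \<le> B^t * norm x"
proof (induction t)
  case (Suc t)
  have "norm (Phi A (Suc t) x z) \<le> B * norm (Phi A t x z)" using assms by simp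
  also have "\<dots> \<le> B * (B^t * norm x)" using Suc assms by (intro mult_left_mono) auto
  finally show ?case by simp
qed simp

lemma backward:
  fixes Z :: "(int \<Rightarrow> 'a::finite) set" and A :: "'a \<Rightarrow> real^'n^'n"
  assumes sof: "sofic Z" and gp: "0 < \<gamma>'" and g1: "\<gamma>' < 1"
    and K1: "K \<ge> 1" and kK: "k \<le> K" and M1: "M1 > 0" and M2: "M2 > 0"
    and nodes: "\<forall>w\<in>dbnodes K Z. pd (Q w) \<and>
                   loewner_le (mat M1) (Q w) \<and> loewner_le (Q w) (mat M2)"
    and edges: "\<forall>(w, j, h)\<in>dbedges K k Z.
                   loewner_less (transpose (A h) ** Q j ** A h) (\<gamma>'\<^sup>2 *\<^sub>R Q w)"
  shows "\<exists>c>0. \<forall>t x0. \<forall>z\<in>Z. norm (Phi A t x0 z) \<le> c * \<gamma>' ^ t * norm x0"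
proof -
  have "\<forall>a. \<exists>Ba>0. \<forall>x. norm (A a *v x) \<le> norm x * Ba"
    using bounded_linear.pos_bounded[OF matrix_vector_mul_bounded_linear] by blast
  then obtain Bf where Bf: "\<And>a x. norm (A a *v x) \<le> norm x * Bf a" "\<And>a. Bf a > 0" by metis
  define B where "B = 1 + (\<Sum>a\<in>UNIV. Bf a)"
  have B1: "B \<ge> 1" unfolding B_def using Bf(2) by (simp add: sum_nonneg less_imp_le)
  have Bb: "\<forall>a x. norm (A a *v x) \<le> B * norm x"
  proof (intro allI)
    fix a and x :: "real^'n"
    have "Bf a \<le> (\<Sum>a\<in>UNIV. Bf a)" using Bf(2) by (intro member_le_sum) (auto simp: less_imp_le)
    then have "Bf a \<le> B" by (simp add: B_def)
    then have "norm x * Bf a \<le> norm x * B" by (intro mult_left_mono) auto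
    then show "norm (A a *v x) \<le> B * norm x" using Bf(1)[of a x] by (simp add: mult.commute)
  qed
  define d where "d = (if k = 0 then K else K - k)"
  have dK: "d \<le> K" by (simp add: d_def)
  define R where "R = M2 / M1"
  have R: "R > 0" using M1 M2 by (simp add: R_def)
  define c where "c = (1 + R) * (B / \<gamma>')^d"
  have c: "c > 0" using R B1 gp by (simp add: c_def)
  have Bd: "B^d > 0" using B1 by simp
  have "\<forall>t x0. \<forall>z\<in>Z. norm (Phi A t x0 z) \<le> c * \<gamma>' ^ t * norm x0"
  proof (intro allI ballI)
    fix t x0 z assume z: "z \<in> Z"
    define W where "W s = map (\<lambda>i. z (int (s+i))) [0..<K]" for s
    define X where "X t = Phi A t x0 z" for t
    have Wn: "W s \<in> dbnodes K Z" for s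
      using window_lang[OF sof z] by (simp add: dbnodes_def W_def)
    have We: "(W s, W (Suc s), z (int (s + d))) \<in> dbedges K k Z" for s
    proof -
      have tb: "tl (W s) = butlast (W (Suc s))"
        by (rule nth_equalityI) (auto simp: W_def nth_tl nth_butlast intro!: arg_cong[where f=z])
      have lst: "last (W (Suc s)) = z (int (s + K))"
      proof -
        obtain K' where K': "K = Suc K'" using K1 by (cases K) auto
        show ?thesis unfolding W_def K' by (simp add: algebra_simps)
      qed
      have app: "W s @ [last (W (Suc s))] = map (\<lambda>i. z (int (s+i))) [0..<Suc K]"
        unfolding lst by (simp add: W_def)
      have "W s @ [last (W (Suc s))] \<in> lang Z" unfolding app by (rule window_lang[OF sof z])
      moreover have "(if k = 0 then z (int (s + d)) = last (W (Suc s))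
            else (1 \<le> k \<and> k \<le> K \<and> z (int (s + d)) = W s ! (K - k)))"
        unfolding lst using kK K1 by (auto simp: d_def W_def intro!: arg_cong[where f=z])
      ultimately show ?thesis using Wn tb unfolding dbedges_def by auto
    qed
    define V where "V s = qf (Q (W s)) (X (s + d))" for s
    have step: "V (Suc s) \<le> \<gamma>'^2 * V s" for s
    proof -
      let ?w = "W s" and ?j = "W (Suc s)" and ?h = "z (int (s + d))"
      have ll: "loewner_less (transpose (A ?h) ** Q ?j ** A ?h) (\<gamma>'\<^sup>2 *\<^sub>R Q ?w)"
        using edges We[of s] by auto
      have "0 \<le> qf (\<gamma>'\<^sup>2 *\<^sub>R Q ?w - transpose (A ?h) ** Q ?j ** A ?h) y" for y
      proof (cases "y = 0")
        case True then show ?thesis by (simp add: qf_def)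
      next
        case False then show ?thesis using ll unfolding loewner_less_def pd_def qf_def
          by (auto intro: less_imp_le)
      qed
      then have "qf (Q ?j) (A ?h *v X (s + d)) \<le> \<gamma>'^2 * qf (Q ?w) (X (s + d))"
        by (simp add: qf_diff qf_scale qf_conj)
      moreover have "X (Suc s + d) = A ?h *v X (s + d)" by (simp add: X_def)
      ultimately show ?thesis by (simp add: V_def)
    qed
    have Vs: "V s \<le> (\<gamma>'^2)^s * V 0" for s
    proof (induction s)
      case (Suc s)
      have "V (Suc s) \<le> \<gamma>'^2 * V s" by (rule step)
      also have "\<dots> \<le> \<gamma>'^2 * ((\<gamma>'^2)^s * V 0)" using Suc by (intro mult_left_mono) auto
      finally show ?case by simp
    qed simp
    have lowV: "M1 * (norm (X (s + d)))^2 \<le> V s" for s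
    proof -
      have "0 \<le> qf (Q (W s) - mat M1) (X (s + d))"
        using nodes Wn[of s] unfolding loewner_le_def psd_def qf_def by auto
      then show ?thesis by (simp add: qf_diff qf_mat V_def)
    qed
    have upV: "V 0 \<le> M2 * (norm (X d))^2"
    proof -
      have "0 \<le> qf (mat M2 - Q (W 0)) (X d)"
        using nodes Wn[of 0] unfolding loewner_le_def psd_def qf_def by auto
      then show ?thesis by (simp add: qf_diff qf_mat V_def)
    qed
    have Xb: "norm (X t) \<le> B^t * norm x0" for t
      unfolding X_def by (rule Phi_bound[OF Bb B1])
    have eqc: "c * \<gamma>'^(s + d) = (1 + R) * B^d * \<gamma>'^s" for s
      using gp by (simp add: c_def power_add power_divide field_simps)
    show "norm (Phi A t x0 z) \<le> c * \<gamma>' ^ t * norm x0"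
    proof (cases "d \<le> t")
      case True
      then obtain s where ts: "t = s + d" by (metis add.commute le_add_diff_inverse)
      have "M1 * (norm (X (s + d)))^2 \<le> V s" by (rule lowV)
      also have "\<dots> \<le> (\<gamma>'^2)^s * V 0" by (rule Vs)
      also have "\<dots> \<le> (\<gamma>'^2)^s * (M2 * (norm (X d))^2)"
        using upV by (intro mult_left_mono) auto
      also have "\<dots> \<le> (\<gamma>'^2)^s * (M2 * (B^d * norm x0)^2)"
        using Xb[of d] M2 by (intro mult_left_mono power_mono) auto
      also have "\<dots> = M1 * (R * (\<gamma>'^s * B^d * norm x0)^2)"
      proof -
        have e: "(\<gamma>'^2)^s = (\<gamma>'^s)^2" by (metis power_mult mult.commute)
        show ?thesis unfolding e R_def using M1 by (simp add: power_mult_distrib)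
      qed
      finally have "M1 * (norm (X (s + d)))^2 \<le> M1 * (R * (\<gamma>'^s * B^d * norm x0)^2)" .
      then have h1: "(norm (X (s + d)))^2 \<le> R * (\<gamma>'^s * B^d * norm x0)^2"
        using M1 by simp
      have "(1 + R)^1 \<le> (1 + R)^2" using R by (intro power_increasing) auto
      then have "R \<le> (1 + R)^2" by simp
      then have "R * (\<gamma>'^s * B^d * norm x0)^2 \<le> (1 + R)^2 * (\<gamma>'^s * B^d * norm x0)^2"
        by (intro mult_right_mono) auto
      with h1 have "(norm (X (s + d)))^2 \<le> ((1 + R) * B^d * \<gamma>'^s * norm x0)^2"
        by (simp add: power_mult_distrib mult_ac)
      then have "norm (X (s + d)) \<le> (1 + R) * B^d * \<gamma>'^s * norm x0"
        by (rule power2_le_imp_le) (use R gp Bd in auto)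
      moreover have "c * \<gamma>'^t * norm x0 = (1 + R) * B^d * \<gamma>'^s * norm x0"
        using eqc[of s] ts by simp
      ultimately show ?thesis using ts unfolding X_def by (simp only:)
    next
      case False
      then have td: "t < d" by simp
      have "norm (X t) \<le> B^t * norm x0" by (rule Xb)
      also have "\<dots> \<le> B^d * norm x0" using B1 td by (intro mult_right_mono power_increasing) auto
      also have "\<dots> \<le> c * \<gamma>'^t * norm x0"
      proof (intro mult_right_mono)
        have "\<gamma>'^d \<le> \<gamma>'^t" using gp g1 td by (intro power_decreasing) auto
        have "c * \<gamma>'^t = (1 + R) * B^d * (\<gamma>'^t / \<gamma>'^d)"
          using gp by (simp add: c_def power_divide field_simps)
        moreover have "1 \<le> \<gamma>'^t / \<gamma>'^d" using \<open>\<gamma>'^d \<le> \<gamma>'^t\<close> gp by simp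
        moreover have "B^d \<le> (1 + R) * B^d" using R Bd by simp
        moreover have "(1 + R) * B^d * 1 \<le> (1 + R) * B^d * (\<gamma>'^t / \<gamma>'^d)"
          using \<open>1 \<le> \<gamma>'^t / \<gamma>'^d\<close> R Bd by (intro mult_left_mono) auto
        ultimately show "B^d \<le> c * \<gamma>'^t" by linarith
      qed simp
      finally show ?thesis by (simp add: X_def)
    qed
  qed
  then show ?thesis using c by blast
qed

theorem mainTheorem11:
  fixes Z :: "(int \<Rightarrow> 'a::finite) set"
    and M :: nat
    and A :: "'a \<Rightarrow> real^'n^'n"
    and \<gamma> :: real
  assumes "sofic Z"
    and "M_finite_type M Z"
    and "0 \<le> \<gamma>" and "\<gamma> < 1"
  shows "(\<forall>\<gamma>'. \<gamma> < \<gamma>' \<and> \<gamma>' < 1 \<longrightarrow>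
            (\<exists>c>0. \<forall>k x0. \<forall>z\<in>Z. norm (Phi A k x0 z) \<le> c * \<gamma>' ^ k * norm x0))
     \<longleftrightarrow>
         (\<forall>\<gamma>'. \<gamma> < \<gamma>' \<and> \<gamma>' < 1 \<longrightarrow>
            (\<exists>K k M1 M2 (Q :: 'a list \<Rightarrow> real^'n^'n).
               K \<ge> max M 1 \<and> k \<le> K \<and> M1 > 0 \<and> M2 > 0 \<and>
               (\<forall>w\<in>dbnodes K Z. pd (Q w) \<and>
                   loewner_le (mat M1) (Q w) \<and> loewner_le (Q w) (mat M2)) \<and>
               (\<forall>(w, j, h)\<in>dbedges K k Z.
                   loewner_less (transpose (A h) ** Q j ** A h) (\<gamma>'\<^sup>2 *\<^sub>R Q w))))"
proof
  assume H: "\<forall>\<gamma>'. \<gamma> < \<gamma>' \<and> \<gamma>' < 1 \<longrightarrow>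
            (\<exists>c>0. \<forall>k x0. \<forall>z\<in>Z. norm (Phi A k x0 z) \<le> c * \<gamma>' ^ k * norm x0)"
  show "\<forall>\<gamma>'. \<gamma> < \<gamma>' \<and> \<gamma>' < 1 \<longrightarrow>
            (\<exists>K k M1 M2 (Q :: 'a list \<Rightarrow> real^'n^'n).
               K \<ge> max M 1 \<and> k \<le> K \<and> M1 > 0 \<and> M2 > 0 \<and>
               (\<forall>w\<in>dbnodes K Z. pd (Q w) \<and>
                   loewner_le (mat M1) (Q w) \<and> loewner_le (Q w) (mat M2)) \<and>
               (\<forall>(w, j, h)\<in>dbedges K k Z.
                   loewner_less (transpose (A h) ** Q j ** A h) (\<gamma>'\<^sup>2 *\<^sub>R Q w)))"
    using forward[OF assms(3) _ _ H] by blast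
next
  assume H: "\<forall>\<gamma>'. \<gamma> < \<gamma>' \<and> \<gamma>' < 1 \<longrightarrow>
            (\<exists>K k M1 M2 (Q :: 'a list \<Rightarrow> real^'n^'n).
               K \<ge> max M 1 \<and> k \<le> K \<and> M1 > 0 \<and> M2 > 0 \<and>
               (\<forall>w\<in>dbnodes K Z. pd (Q w) \<and>
                   loewner_le (mat M1) (Q w) \<and> loewner_le (Q w) (mat M2)) \<and>
               (\<forall>(w, j, h)\<in>dbedges K k Z.
                   loewner_less (transpose (A h) ** Q j ** A h) (\<gamma>'\<^sup>2 *\<^sub>R Q w)))"
  show "\<forall>\<gamma>'. \<gamma> < \<gamma>' \<and> \<gamma>' < 1 \<longrightarrow>
            (\<exists>c>0. \<forall>k x0. \<forall>z\<in>Z. norm (Phi A k x0 z) \<le> c * \<gamma>' ^ k * norm x0)"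
  proof (intro allI impI)
    fix g assume g: "\<gamma> < g \<and> g < 1"
    then obtain K k M1 M2 and Q :: "'a list \<Rightarrow> real^'n^'n" where
      q: "K \<ge> max M 1" "k \<le> K" "M1 > 0" "M2 > 0"
        "\<forall>w\<in>dbnodes K Z. pd (Q w) \<and> loewner_le (mat M1) (Q w) \<and> loewner_le (Q w) (mat M2)"
        "\<forall>(w, j, h)\<in>dbedges K k Z.
                   loewner_less (transpose (A h) ** Q j ** A h) (g\<^sup>2 *\<^sub>R Q w)"
      using H by blast
    show "\<exists>c>0. \<forall>k x0. \<forall>z\<in>Z. norm (Phi A k x0 z) \<le> c * g ^ k * norm x0"
      using backward[OF assms(1) _ _ _ q(2-6)] q(1) g assms(3) by auto
  qed
qed

end
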